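(* Let $k\ge2$, $p\in(0,1)$, $q=1-p$, and $R^{(k)}_n(p)=\mathbb{E}[Y(k,n,p)]$. Then $R^{(k)}_1(p)=1$, for $n\ge2$ $$R^{(k)}_n(p)=n-\frac1q\sum_{i=1}^{n-1}(n-i)\,s^{(k)}_i\,(p^{k-1}q)^i,$$ and $$\sum_{n\ge1}R^{(k)}_n(p)z^n=\frac{z}{(1-z)^2}\left(1-\frac1qS^{(k)}(p^{k-1}qz)\right).$$
   Context: Matchbox process: fix integers $k\ge 2$, $n\ge 1$ and $p\in(0,1)$, $q=1-p$. Initially $k$ boxes each contain $n$ matches. At each time step, independently, with probability $p$ a match is removed from a box currently containing the largest number of matches, and with probability $q$ from a box currently containing the smallest number (ties broken arbitrarily). A diagonal state is a state in which all $k$ boxes contain the same number of matches. Let $Y=Y(k,n,p)$ be the smallest $i\in\{1,\dots,n-1\}$ such that the process reaches the diagonal state in which every box contains $n-i$ matches (before any box is empty), with the convention $Y=n$ if no such $i$ exists. $s^{(k)}_i=\frac{k-1}{ki-1}\binom{ki-1}{i-1}$ and $S^{(k)}(z)=\sum_{i\ge1}s^{(k)}_iz^i$. *)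

theory Defs
  imports "HOL-Probability.Probability" "HOL-Computational_Algebra.Formal_Power_Series"
begin

text \<open>States of the matchbox process: the multiset of box contents (k boxes).
  One step: True = remove a match from a box with the largest number of matches
  (probability p), False = from a box with the smallest number (probability q).
  Once some box is empty the process is frozen (it is only considered before
  any box is empty).\<close>

definition mb_step :: "bool \<Rightarrow> nat multiset \<Rightarrow> nat multiset" where
  "mb_step b M =
     (if 0 \<in># M then M
      else (let x = (if b then Max (set_mset M) else Min (set_mset M))
            in add_mset (x - 1) (M - {#x#})))"

definition mb_state :: "nat \<Rightarrow> nat \<Rightarrow> bool list \<Rightarrow> nat \<Rightarrow> nat multiset" where
  "mb_state k n \<omega> t = foldl (\<lambda>M b. mb_step b M) (replicate_mset k n) (take t \<omega>)"

text \<open>The diagonal state with all boxes containing n - i matches can only occur at time k*i.\<close>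
definition mb_hits :: "nat \<Rightarrow> nat \<Rightarrow> bool list \<Rightarrow> nat \<Rightarrow> bool" where
  "mb_hits k n \<omega> i \<longleftrightarrow> mb_state k n \<omega> (k * i) = replicate_mset k (n - i)"

definition mb_Y :: "nat \<Rightarrow> nat \<Rightarrow> bool list \<Rightarrow> nat" where
  "mb_Y k n \<omega> =
     (if \<exists>i\<in>{1..n-1}. mb_hits k n \<omega> i then (LEAST i. i \<in> {1..n-1} \<and> mb_hits k n \<omega> i) else n)"

fun choice_pmf :: "real \<Rightarrow> nat \<Rightarrow> bool list pmf" where
  "choice_pmf p 0 = return_pmf []"
| "choice_pmf p (Suc N) = bind_pmf (bernoulli_pmf p) (\<lambda>b. map_pmf (\<lambda>xs. b # xs) (choice_pmf p N))"

text \<open>R_n^(k)(p) = E[Y(k,n,p)]; Y only depends on the first k(n-1) steps.\<close>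
definition mb_R :: "nat \<Rightarrow> nat \<Rightarrow> real \<Rightarrow> real" where
  "mb_R k n p = measure_pmf.expectation (choice_pmf p (k * (n - 1))) (\<lambda>\<omega>. real (mb_Y k n \<omega>))"

definition s_coef :: "nat \<Rightarrow> nat \<Rightarrow> real" where
  "s_coef k i = (real k - 1) / (real (k * i) - 1) * real ((k * i - 1) choose (i - 1))"

text \<open>The formal power series S^(k)(c z) = sum_{i>=1} s_i c^i z^i.\<close>
definition S_fps :: "nat \<Rightarrow> real \<Rightarrow> real fps" where
  "S_fps k c = Abs_fps (\<lambda>i. if i = 0 then 0 else s_coef k i * c ^ i)"

end

theory Submission
  imports Defs
begin


lemma prob_choice_Suc:
  assumes "0 \<le> p" "p \<le> 1"
  shows "measure_pmf.prob (choice_pmf p (Suc N)) {\<omega>. P \<omega>}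
     = p * measure_pmf.prob (choice_pmf p N) {\<omega>. P (True # \<omega>)}
       + (1 - p) * measure_pmf.prob (choice_pmf p N) {\<omega>. P (False # \<omega>)}"
proof -
  have "ennreal (measure_pmf.prob (choice_pmf p (Suc N)) {\<omega>. P \<omega>})
     = emeasure (measure_pmf (choice_pmf p (Suc N))) {\<omega>. P \<omega>}"
    by (simp add: measure_pmf.emeasure_eq_measure)
  also have "\<dots> = (\<integral>\<^sup>+b. emeasure (measure_pmf (map_pmf (\<lambda>xs. b # xs) (choice_pmf p N))) {\<omega>. P \<omega>} \<partial>measure_pmf (bernoulli_pmf p))"
    by simp
  also have "\<dots> = emeasure (measure_pmf (map_pmf (\<lambda>xs. True # xs) (choice_pmf p N))) {\<omega>. P \<omega>} * p
     + emeasure (measure_pmf (map_pmf (\<lambda>xs. False # xs) (choice_pmf p N))) {\<omega>. P \<omega>} * (1 - p)"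
    using assms by (subst nn_integral_bernoulli_pmf) auto
  also have "\<dots> = ennreal (p * measure_pmf.prob (choice_pmf p N) {\<omega>. P (True # \<omega>)}
       + (1 - p) * measure_pmf.prob (choice_pmf p N) {\<omega>. P (False # \<omega>)})"
    using assms by (simp add: measure_pmf.emeasure_eq_measure ennreal_mult' ennreal_plus mult.commute vimage_def)
  finally show ?thesis using assms
    by (subst (asm) ennreal_inj) auto
qed

lemma set_choice: "set_pmf (choice_pmf p N) \<subseteq> {xs. length xs = N}"
  by (induction N) auto

lemma finite_choice: "finite (set_pmf (choice_pmf p N))"
  by (rule finite_subset[OF set_choice]) (use finite_lists_length_eq[of "UNIV::bool set" N] in simp)

definition gst :: "nat \<Rightarrow> bool \<Rightarrow> nat \<times> nat \<Rightarrow> nat \<times> nat" where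
  "gst k b s = (case s of (u, D) \<Rightarrow> if u = 0 then (u, D) else if D = 0 then (u - 1, k - 1)
      else if b then (u, D - 1) else (u - 1, D + k - 1))"

definition rep :: "nat \<Rightarrow> nat \<times> nat \<Rightarrow> nat multiset" where
  "rep k s = (case s of (u, D) \<Rightarrow> add_mset u (replicate_mset (k - 1 - D mod (k - 1)) (u + D div (k - 1))
      + replicate_mset (D mod (k - 1)) (u + D div (k - 1) + 1)))"

lemma rep_abr:
  assumes "k \<ge> 2" "r < k - 1"
  shows "rep k (u, (k - 1) * a + r) = add_mset u (replicate_mset (k - 1 - r) (u + a) + replicate_mset r (u + a + 1))"
  using assms by (simp add: rep_def)

lemma step_rep:
  assumes k: "k \<ge> 2"
  shows "mb_step b (rep k (u, D)) = rep k (gst k b (u, D))"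
proof -
  define d where "d = k - 1"
  have d: "d \<ge> 1" using k by (simp add: d_def)
  have kd: "k = Suc d" using k by (simp add: d_def)
  define a where "a = D div d"
  define r where "r = D mod d"
  have D: "D = d * a + r" by (simp add: a_def r_def)
  have r: "r < d" using d by (simp add: r_def)
  have R: "rep k (u, D) = add_mset u (replicate_mset (d - r) (u + a) + replicate_mset r (u + a + 1))"
    using rep_abr[OF k, of r u a] r D by (simp add: d_def)
  show ?thesis
  proof (cases "u = 0")
    case True
    have "u \<in># rep k (u, D)" by (simp add: R)
    then show ?thesis using True by (simp add: mb_step_def gst_def)
  next
    case u: False
    have S: "set_mset (rep k (u, D)) = {u} \<union> (if d - r > 0 then {u + a} else {}) \<union> (if r > 0 then {u + a + 1} else {})"
      by (auto simp: R)
    have n0: "0 \<notin># rep k (u, D)" using u by (auto simp: R)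
    have mn: "Min (set_mset (rep k (u, D))) = u"
      by (rule Min_eqI) (auto simp: S split: if_splits)
    show ?thesis
    proof (cases "D = 0")
      case True
      hence "a = 0" "r = 0" using D d by auto
      hence R0: "rep k (u, D) = replicate_mset k u" using R kd by simp
      have "gst k b (u, D) = (u - 1, d * 1 + 0)" using True u by (simp add: gst_def d_def)
      moreover have "rep k (u - 1, d * 1 + 0) = add_mset (u - 1) (replicate_mset d u)"
        using rep_abr[OF k, of 0 "u - 1" 1] d u by (simp add: d_def)
      moreover have "mb_step b (rep k (u, D)) = add_mset (u - 1) (replicate_mset d u)"
        using u unfolding R0 by (simp add: mb_step_def kd)
      ultimately show ?thesis by simp
    next
      case Dpos: False
      show ?thesis
      proof (cases b)
        case False
        have "D + k - 1 = d * (a + 1) + r" using D kd by simp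
        hence g: "gst k b (u, D) = (u - 1, d * (a + 1) + r)" using False Dpos u by (simp add: gst_def)
        have "rep k (u - 1, d * (a + 1) + r) = add_mset (u - 1) (replicate_mset (d - r) (u + a) + replicate_mset r (u + a + 1))"
          using rep_abr[OF k, of r "u - 1" "a + 1"] r u by (simp add: d_def)
        moreover have "mb_step b (rep k (u, D)) = add_mset (u - 1) (replicate_mset (d - r) (u + a) + replicate_mset r (u + a + 1))"
          using False n0 mn by (simp add: mb_step_def R)
        ultimately show ?thesis using g by simp
      next
        case True
        show ?thesis
        proof (cases "r > 0")
          case rp: True
          have mx: "Max (set_mset (rep k (u, D))) = u + a + 1"
            by (rule Max_eqI) (use rp in \<open>auto simp: S split: if_splits\<close>)
          have g: "gst k b (u, D) = (u, d * a + (r - 1))" using True Dpos u D rp by (simp add: gst_def d_def)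
          obtain r' where r': "r = Suc r'" using rp by (cases r) auto
          have "rep k (u, d * a + (r - 1)) = add_mset u (replicate_mset (d - (r - 1)) (u + a) + replicate_mset (r - 1) (u + a + 1))"
            using rep_abr[OF k, of "r - 1" u a] r by (simp add: d_def)
          moreover have "d - (r - 1) = Suc (d - r)" using rp r by simp
          moreover have "mb_step b (rep k (u, D)) = add_mset (u + a) (add_mset u (replicate_mset (d - r) (u + a) + replicate_mset r' (u + a + 1)))"
            using True n0 mx by (simp add: mb_step_def R r')
          ultimately show ?thesis using g r' by (simp add: add_mset_commute)
        next
          case r0: False
          hence r0: "r = 0" by simp
          have ap: "a \<ge> 1" using Dpos D r0 by (cases a) auto
          obtain a' where a': "a = Suc a'" using ap by (cases a) auto
          obtain d' where d': "d = Suc d'" using d by (cases d) auto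
          have mx: "Max (set_mset (rep k (u, D))) = u + a"
            by (rule Max_eqI) (use r0 r in \<open>auto simp: S split: if_splits\<close>)
          have "D - 1 = d * a' + d'" using D r0 a' d' by simp
          hence g: "gst k b (u, D) = (u, d * a' + d')" using True Dpos u by (simp add: gst_def)
          have "rep k (u, d * a' + d') = add_mset u (replicate_mset (d - d') (u + a') + replicate_mset d' (u + a' + 1))"
            unfolding d_def by (rule rep_abr[OF k]) (use d' in \<open>simp add: d_def\<close>)
          moreover have "d - d' = 1" using d' by simp
          moreover have "mb_step b (rep k (u, D)) = add_mset (u + a') (add_mset u (replicate_mset d' (u + a)))"
            using True n0 mx r0 by (simp add: mb_step_def R d' a')
          ultimately show ?thesis using g a' by (simp add: add_mset_commute)
        qed
      qed
    qed
  qed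
qed



definition fs :: "nat \<Rightarrow> nat \<times> nat \<Rightarrow> bool list \<Rightarrow> nat \<times> nat" where
  "fs k s xs = foldl (\<lambda>s b. gst k b s) s xs"

lemma fs_simps[simp]: "fs k s [] = s" "fs k s (b # xs) = fs k (gst k b s) xs"
  by (simp_all add: fs_def)

lemma fold_rep:
  assumes "k \<ge> 2"
  shows "foldl (\<lambda>M b. mb_step b M) (rep k s) xs = rep k (fs k s xs)"
proof (induction xs arbitrary: s)
  case Nil thus ?case by simp
next
  case (Cons b xs)
  obtain u D where s: "s = (u, D)" by fastforce
  show ?case using Cons step_rep[OF assms, of b u D] s by simp
qed

lemma rep_diag:
  assumes "k \<ge> 2"
  shows "rep k (u, D) = replicate_mset k v \<longleftrightarrow> u = v \<and> D = 0"
proof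
  define d where "d = k - 1"
  have kd: "k = Suc d" "d \<ge> 1" using assms by (auto simp: d_def)
  assume h: "rep k (u, D) = replicate_mset k v"
  have R: "rep k (u, D) = add_mset u (replicate_mset (d - D mod d) (u + D div d) + replicate_mset (D mod d) (u + D div d + 1))"
    by (simp add: rep_def d_def)
  have sv: "set_mset (rep k (u, D)) = {v}" using h kd by simp
  have uv: "u = v" using sv R by auto
  show "u = v \<and> D = 0"
  proof (rule ccontr)
    assume "\<not> (u = v \<and> D = 0)"
    hence D: "D > 0" using uv by simp
    show False
    proof (cases "D mod d > 0")
      case True
      hence "u + D div d + 1 \<in> set_mset (rep k (u, D))" using R by simp
      thus False using sv uv by simp
    next
      case False
      hence "D div d * d = D" using div_mult_mod_eq[of D d] by simp
      hence "D div d > 0" using D by (cases "D div d") auto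
      moreover have "d - D mod d > 0" using False kd by simp
      ultimately have "u + D div d \<in> set_mset (rep k (u, D))" "u + D div d \<noteq> u" using R by auto
      thus False using sv uv by simp
    qed
  qed
next
  assume "u = v \<and> D = 0"
  moreover obtain d where "k = Suc d" using assms by (cases k) auto
  ultimately show "rep k (u, D) = replicate_mset k v"
    by (simp add: rep_def)
qed

lemma state_fs:
  assumes "k \<ge> 2"
  shows "mb_state k n \<omega> t = rep k (fs k (n, 0) (take t \<omega>))"
proof -
  have "replicate_mset k n = rep k (n, 0)" using rep_diag[OF assms, of n 0 n] by simp
  thus ?thesis unfolding mb_state_def using fold_rep[OF assms] by simp
qed

lemma hits_fs:
  assumes "k \<ge> 2"
  shows "mb_hits k n \<omega> i \<longleftrightarrow> fs k (n, 0) (take (k * i) \<omega>) = (n - i, 0)"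
  using rep_diag[OF assms] state_fs[OF assms] unfolding mb_hits_def
  by (metis prod.collapse prod.inject)

lemma fs_frozen: "fs k (0, D) xs = (0, D)"
  by (induction xs) (simp_all add: gst_def)

lemma fs_inv:
  assumes "fst (fs k s xs) \<ge> 1" "k \<ge> 1"
  shows "k * fst (fs k s xs) + snd (fs k s xs) + length xs = k * fst s + snd s"
  using assms(1)
proof (induction xs arbitrary: s)
  case Nil thus ?case by simp
next
  case (Cons b xs)
  obtain u D where s: "s = (u, D)" by fastforce
  have u: "u \<ge> 1"
  proof (rule ccontr)
    assume "\<not> u \<ge> 1" hence "u = 0" by simp
    hence "gst k b s = (0, D)" using s by (simp add: gst_def)
    thus False using Cons.prems fs_frozen by simp
  qed
  have IH: "k * fst (fs k s (b # xs)) + snd (fs k s (b # xs)) + length xs = k * fst (gst k b s) + snd (gst k b s)"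
    using Cons by simp
  have "k * fst (gst k b s) + snd (gst k b s) + 1 = k * u + D"
    using u s assms(2) by (auto simp: gst_def algebra_simps) 
  thus ?case using IH s by simp
qed

definition good :: "nat \<times> nat \<Rightarrow> bool" where
  "good s \<longleftrightarrow> snd s = 0 \<and> fst s \<ge> 1"

fun fh :: "nat \<Rightarrow> nat \<times> nat \<Rightarrow> bool list \<Rightarrow> nat option" where
  "fh k s [] = None"
| "fh k s (b # xs) = (if good (gst k b s) then Some 1 else map_option Suc (fh k (gst k b s) xs))"

lemma fh_Some:
  "fh k s xs = Some m \<longleftrightarrow> 1 \<le> m \<and> m \<le> length xs \<and> good (fs k s (take m xs))
     \<and> (\<forall>t. 1 \<le> t \<and> t < m \<longrightarrow> \<not> good (fs k s (take t xs)))"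
proof (induction xs arbitrary: s m)
  case Nil thus ?case by auto
next
  case (Cons b xs)
  show ?case
  proof (cases "good (gst k b s)")
    case True
    show ?thesis
    proof
      assume "fh k s (b # xs) = Some m"
      hence "m = 1" using True by simp
      thus "1 \<le> m \<and> m \<le> length (b # xs) \<and> good (fs k s (take m (b # xs)))
        \<and> (\<forall>t. 1 \<le> t \<and> t < m \<longrightarrow> \<not> good (fs k s (take t (b # xs))))" using True by simp
    next
      assume h: "1 \<le> m \<and> m \<le> length (b # xs) \<and> good (fs k s (take m (b # xs)))
        \<and> (\<forall>t. 1 \<le> t \<and> t < m \<longrightarrow> \<not> good (fs k s (take t (b # xs))))"
      have "m = 1"
      proof (rule ccontr)
        assume "m \<noteq> 1" hence "1 < m" using h by simp
        hence "\<not> good (fs k s (take 1 (b # xs)))" using h by blast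
        thus False using True by simp
      qed
      thus "fh k s (b # xs) = Some m" using True by simp
    qed
  next
    case False
    show ?thesis
    proof (cases m)
      case 0 thus ?thesis using False by auto
    next
      case (Suc m')
      have "fh k s (b # xs) = Some m \<longleftrightarrow> fh k (gst k b s) xs = Some m'"
        using False Suc by auto
      also have "\<dots> \<longleftrightarrow> 1 \<le> m' \<and> m' \<le> length xs \<and> good (fs k (gst k b s) (take m' xs))
     \<and> (\<forall>t. 1 \<le> t \<and> t < m' \<longrightarrow> \<not> good (fs k (gst k b s) (take t xs)))" by (rule Cons.IH)
      also have "\<dots> \<longleftrightarrow> 1 \<le> m \<and> m \<le> length (b # xs) \<and> good (fs k s (take m (b # xs)))
        \<and> (\<forall>t. 1 \<le> t \<and> t < m \<longrightarrow> \<not> good (fs k s (take t (b # xs))))"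
      proof
        assume h: "1 \<le> m' \<and> m' \<le> length xs \<and> good (fs k (gst k b s) (take m' xs))
     \<and> (\<forall>t. 1 \<le> t \<and> t < m' \<longrightarrow> \<not> good (fs k (gst k b s) (take t xs)))"
        have "\<not> good (fs k s (take t (b # xs)))" if "1 \<le> t" "t < m" for t
        proof (cases t)
          case 0 thus ?thesis using that by simp
        next
          case (Suc t')
          thus ?thesis using h False that Suc \<open>m = Suc m'\<close> by (cases "t' = 0") auto
        qed
        thus "1 \<le> m \<and> m \<le> length (b # xs) \<and> good (fs k s (take m (b # xs)))
        \<and> (\<forall>t. 1 \<le> t \<and> t < m \<longrightarrow> \<not> good (fs k s (take t (b # xs))))"
          using h Suc by auto
      next
        assume h: "1 \<le> m \<and> m \<le> length (b # xs) \<and> good (fs k s (take m (b # xs)))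
        \<and> (\<forall>t. 1 \<le> t \<and> t < m \<longrightarrow> \<not> good (fs k s (take t (b # xs))))"
        have m': "m' \<noteq> 0" using h False Suc by (cases "m' = 0") auto
        have "\<not> good (fs k (gst k b s) (take t xs))" if "1 \<le> t" "t < m'" for t
          using h[THEN conjunct2, THEN conjunct2, THEN conjunct2, rule_format, of "Suc t"] that Suc by simp
        thus "1 \<le> m' \<and> m' \<le> length xs \<and> good (fs k (gst k b s) (take m' xs))
     \<and> (\<forall>t. 1 \<le> t \<and> t < m' \<longrightarrow> \<not> good (fs k (gst k b s) (take t xs)))"
          using h m' Suc by auto
      qed
      finally show ?thesis .
    qed
  qed
qed



lemma good_time:
  assumes k: "k \<ge> 2" and t: "1 \<le> t" and g: "good (fs k (n, 0) (take t \<omega>))" and tl: "t \<le> length \<omega>"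
  shows "\<exists>j. t = k * j \<and> 1 \<le> j \<and> j \<le> n - 1 \<and> fs k (n, 0) (take t \<omega>) = (n - j, 0)"
proof -
  obtain u D where s: "fs k (n, 0) (take t \<omega>) = (u, D)" by fastforce
  have u: "u \<ge> 1" "D = 0" using g s by (auto simp: good_def)
  have "k * u + D + t = k * n" using fs_inv[of k "(n,0)" "take t \<omega>"] s u k tl by simp
  hence e: "t = k * (n - u)" using u by (simp add: diff_mult_distrib2)
  have "n - u \<ge> 1" using e t by (cases "n - u") auto
  moreover have "u = n - (n - u)" using \<open>n - u \<ge> 1\<close> by simp
  ultimately show ?thesis using e s u by (intro exI[of _ "n - u"]) auto
qed

lemma hits_good:
  assumes k: "k \<ge> 2" and j: "1 \<le> j" "j \<le> n - 1" and l: "length \<omega> = k * (n - 1)"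
  shows "mb_hits k n \<omega> j \<longleftrightarrow> good (fs k (n, 0) (take (k * j) \<omega>))"
proof
  assume "mb_hits k n \<omega> j"
  thus "good (fs k (n, 0) (take (k * j) \<omega>))" using hits_fs[OF k] j by (simp add: good_def)
next
  assume g: "good (fs k (n, 0) (take (k * j) \<omega>))"
  have "1 \<le> k * j" using k j by simp
  moreover have "k * j \<le> length \<omega>" using l j by simp
  ultimately obtain j' where "k * j = k * j'" "fs k (n, 0) (take (k * j) \<omega>) = (n - j', 0)"
    using good_time[OF k _ g] by blast
  thus "mb_hits k n \<omega> j" using hits_fs[OF k] k by simp
qed

lemma Y_eq:
  assumes k: "k \<ge> 2" and n: "n \<ge> 2" and i: "1 \<le> i" "i \<le> n - 1" and l: "length \<omega> = k * (n - 1)"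
  shows "mb_Y k n \<omega> = i \<longleftrightarrow> fh k (n, 0) \<omega> = Some (k * i)"
proof -
  have "mb_Y k n \<omega> = i \<longleftrightarrow> mb_hits k n \<omega> i \<and> (\<forall>j. 1 \<le> j \<and> j < i \<longrightarrow> \<not> mb_hits k n \<omega> j)"
  proof
    assume Y: "mb_Y k n \<omega> = i"
    have ex: "\<exists>i\<in>{1..n-1}. mb_hits k n \<omega> i"
    proof (rule ccontr)
      assume "\<not> ?thesis" hence "mb_Y k n \<omega> = n" by (simp add: mb_Y_def)
      thus False using Y i n by simp
    qed
    hence L: "(LEAST i. i \<in> {1..n-1} \<and> mb_hits k n \<omega> i) = i" using Y by (simp add: mb_Y_def)
    have "(LEAST i. i \<in> {1..n-1} \<and> mb_hits k n \<omega> i) \<in> {1..n-1} \<and> mb_hits k n \<omega> (LEAST i. i \<in> {1..n-1} \<and> mb_hits k n \<omega> i)"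
      by (rule LeastI_ex) (use ex in blast)
    hence "i \<in> {1..n-1} \<and> mb_hits k n \<omega> i" unfolding L .
    moreover have "\<not> mb_hits k n \<omega> j" if "1 \<le> j" "j < i" for j
      using not_less_Least[of j "\<lambda>i. i \<in> {1..n-1} \<and> mb_hits k n \<omega> i"] L that i by auto
    ultimately show "mb_hits k n \<omega> i \<and> (\<forall>j. 1 \<le> j \<and> j < i \<longrightarrow> \<not> mb_hits k n \<omega> j)" by auto
  next
    assume h: "mb_hits k n \<omega> i \<and> (\<forall>j. 1 \<le> j \<and> j < i \<longrightarrow> \<not> mb_hits k n \<omega> j)"
    have "(LEAST i. i \<in> {1..n-1} \<and> mb_hits k n \<omega> i) = i"
      by (rule Least_equality) (use h i in \<open>auto simp: not_less[symmetric]\<close>)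
    moreover have "\<exists>i\<in>{1..n-1}. mb_hits k n \<omega> i" using h i by auto
    ultimately show "mb_Y k n \<omega> = i" by (simp add: mb_Y_def)
  qed
  also have "\<dots> \<longleftrightarrow> good (fs k (n, 0) (take (k * i) \<omega>)) \<and> (\<forall>t. 1 \<le> t \<and> t < k * i \<longrightarrow> \<not> good (fs k (n, 0) (take t \<omega>)))"
  proof -
    have "(\<forall>j. 1 \<le> j \<and> j < i \<longrightarrow> \<not> mb_hits k n \<omega> j) \<longleftrightarrow> (\<forall>t. 1 \<le> t \<and> t < k * i \<longrightarrow> \<not> good (fs k (n, 0) (take t \<omega>)))"
    proof
      assume A: "\<forall>j. 1 \<le> j \<and> j < i \<longrightarrow> \<not> mb_hits k n \<omega> j"
      show "\<forall>t. 1 \<le> t \<and> t < k * i \<longrightarrow> \<not> good (fs k (n, 0) (take t \<omega>))"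
      proof (intro allI impI notI)
        fix t assume t: "1 \<le> t \<and> t < k * i" and g: "good (fs k (n, 0) (take t \<omega>))"
        have "t \<le> length \<omega>" using t l i by (metis less_imp_le_nat mult_le_mono2 order_trans)
        then obtain j where j: "t = k * j" "1 \<le> j" "j \<le> n - 1" using good_time[OF k _ g] t by blast
        hence "j < i" using t by simp
        moreover have "mb_hits k n \<omega> j" using hits_good[OF k j(2,3) l] g j by simp
        ultimately show False using A j by blast
      qed
    next
      assume A: "\<forall>t. 1 \<le> t \<and> t < k * i \<longrightarrow> \<not> good (fs k (n, 0) (take t \<omega>))"
      show "\<forall>j. 1 \<le> j \<and> j < i \<longrightarrow> \<not> mb_hits k n \<omega> j"
      proof (intro allI impI notI)
        fix j assume j: "1 \<le> j \<and> j < i" and h: "mb_hits k n \<omega> j"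
        have "good (fs k (n, 0) (take (k * j) \<omega>))" using hits_good[OF k _ _ l] h j i by simp
        moreover have "1 \<le> k * j" "k * j < k * i" using j k by auto
        ultimately show False using A by blast
      qed
    qed
    moreover have "mb_hits k n \<omega> i \<longleftrightarrow> good (fs k (n, 0) (take (k * i) \<omega>))" using hits_good[OF k i l] .
    ultimately show ?thesis by simp
  qed
  also have "\<dots> \<longleftrightarrow> fh k (n, 0) \<omega> = Some (k * i)"
    using fh_Some[of k "(n, 0)" \<omega> "k * i"] k i l by simp
  finally show ?thesis .
qed



fun Aw :: "nat \<Rightarrow> real \<Rightarrow> nat \<Rightarrow> nat \<Rightarrow> real" where
  "Aw k p 0 m = (if m = 0 then 1 else 0)"
| "Aw k p (Suc h) 0 = 0"
| "Aw k p (Suc h) (Suc m) = p * Aw k p h m + (1 - p) * Aw k p (Suc h + k - 1) m"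

definition cc :: "nat \<Rightarrow> nat \<Rightarrow> nat \<Rightarrow> real" where
  "cc k h j = real h / real (k * j + h) * real ((k * j + h) choose j)"

lemma cc_rec:
  assumes k: "k \<ge> 1"
  shows "cc k (Suc h') j = (if h' = 0 then (if j = 0 then 1 else 0) else cc k h' j)
           + (if j = 0 then 0 else cc k (h' + k) (j - 1))"
proof (cases j)
  case 0 thus ?thesis by (simp add: cc_def)
next
  case (Suc j')
  define N where "N = k * j + h' + 1"
  have N1: "N - 1 = k * j + h'" by (simp add: N_def)
  have "k * j \<ge> 1" using k Suc by simp
  hence "N \<ge> 2" unfolding N_def by linarith
  hence Npos: "real N - 1 > 0" by simp
  have "j \<le> k * j" using k by simp
  hence jN: "j \<le> N" unfolding N_def by linarith
  have f1': "real (Suc j') * real (N choose Suc j') = real N * real ((N - 1) choose j')"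
    using arg_cong[OF binomial_absorption[of j' N], of real] by (simp only: of_nat_mult)
  have f1: "real j * real (N choose j) = real N * real ((N - 1) choose j')"
    using f1' Suc by simp
  have f2': "real (N - j) * real (N choose j) = real N * real ((N - 1) choose j)"
    using arg_cong[OF binomial_absorb_comp[of N j], of real] by (simp only: of_nat_mult)
  have f2: "(real N - real j) * real (N choose j) = real N * real ((N - 1) choose j)"
    using f2' jN by (simp add: of_nat_diff)
  have e1: "k * j' + (h' + k) = N - 1" using Suc by (simp add: N_def)
  have e2: "k * j + Suc h' = N" by (simp add: N_def)
  have lhs: "cc k (Suc h') j = real (Suc h') / real N * real (N choose j)"
    unfolding cc_def e2 by (rule refl)
  have r1: "(if h' = 0 then (if j = 0 then 1 else 0) else cc k h' j) = real h' / (real N - 1) * real ((N - 1) choose j)"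
  proof (cases "h' = 0")
    case True thus ?thesis using Suc by simp
  next
    case False
    have "cc k h' j = real h' / real (N - 1) * real ((N - 1) choose j)" unfolding cc_def N1 by (rule refl)
    moreover have "real (N - 1) = real N - 1" using Npos by (simp add: of_nat_diff)
    ultimately show ?thesis using False Suc by simp
  qed
  have r2: "cc k (h' + k) j' = real (h' + k) / (real N - 1) * real ((N - 1) choose j')"
    unfolding cc_def e1 using Npos by (simp add: of_nat_diff)
  have C1: "real ((N - 1) choose j) = (real N - real j) * real (N choose j) / real N"
    using f2 Npos by (simp add: field_simps)
  have C2: "real ((N - 1) choose j') = real j * real (N choose j) / real N"
    using f1 Npos by (simp add: field_simps)
  have NN: "real N = real k * real j + real h' + 1" by (simp add: N_def)
  have key: "(real h' + 1) * (real N - 1) = real h' * (real N - real j) + (real h' + real k) * real j"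
    by (simp add: NN algebra_simps)
  have "real h' / (real N - 1) * ((real N - real j) * real (N choose j) / real N)
        + real (h' + k) / (real N - 1) * (real j * real (N choose j) / real N)
      = real (N choose j) / (real N * (real N - 1)) * (real h' * (real N - real j) + (real h' + real k) * real j)"
    using Npos by (simp add: field_simps add_divide_distrib[symmetric])
  also have "\<dots> = real (N choose j) / (real N * (real N - 1)) * ((real h' + 1) * (real N - 1))"
    by (simp only: key)
  also have "\<dots> = real (Suc h') / real N * real (N choose j)"
    using Npos by (simp add: field_simps)
  finally have "real (Suc h') / real N * real (N choose j)
      = real h' / (real N - 1) * ((real N - real j) * real (N choose j) / real N)
        + real (h' + k) / (real N - 1) * (real j * real (N choose j) / real N)" by simp
  thus ?thesis using Suc lhs r1 r2 C1 C2 by (simp add: ac_simps)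
qed



definition Bw :: "nat \<Rightarrow> real \<Rightarrow> nat \<Rightarrow> nat \<Rightarrow> real" where
  "Bw k p h m = (if h = 0 then (if m = 0 then 1 else 0)
     else if h \<le> m \<and> k dvd (m - h) then cc k h ((m - h) div k) * p ^ (m - (m - h) div k) * (1 - p) ^ ((m - h) div k)
     else 0)"

lemma Bw_at:
  assumes "k \<ge> 1" "h \<ge> 1"
  shows "Bw k p h (k * j + h) = cc k h j * p ^ ((k - 1) * j + h) * (1 - p) ^ j"
proof -
  have "(k * j + h - h) div k = j" using assms by simp
  moreover have "k * j + h - j = (k - 1) * j + h" using assms
    by (simp add: diff_mult_distrib)
  ultimately show ?thesis using assms by (simp add: Bw_def)
qed

lemma Bw_off:
  assumes "h \<ge> 1" "\<not> (\<exists>j. m = k * j + h)"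
  shows "Bw k p h m = 0"
proof -
  have "\<not> (h \<le> m \<and> k dvd (m - h))"
  proof
    assume "h \<le> m \<and> k dvd (m - h)"
    then obtain j where "m - h = k * j" "h \<le> m" by (auto elim: dvdE)
    hence "m = k * j + h" by simp
    thus False using assms by blast
  qed
  thus ?thesis using assms by (auto simp: Bw_def)
qed

lemma Aw_Bw:
  assumes k: "k \<ge> 1"
  shows "Aw k p h m = Bw k p h m"
proof (induction m arbitrary: h)
  case 0
  then show ?case by (cases h) (simp_all add: Bw_def)
next
  case (Suc m')
  show ?case
  proof (cases h)
    case 0 thus ?thesis by (simp add: Bw_def)
  next
    case (Suc h')
    have A: "Aw k p h (Suc m') = p * Bw k p h' m' + (1 - p) * Bw k p (h' + k) m'"
      using Suc.IH Suc k by simp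
    show ?thesis
    proof (cases "\<exists>j. m' = k * j + h'")
      case True
      then obtain j where j: "m' = k * j + h'" by blast
      have L: "Bw k p h (Suc m') = cc k (Suc h') j * p ^ ((k - 1) * j + h' + 1) * (1 - p) ^ j"
        using Bw_at[where h=h and j=j and p=p, OF k] Suc j by simp
      have B1: "Bw k p h' m' = (if h' = 0 then (if j = 0 then 1 else 0) else cc k h' j) * p ^ ((k - 1) * j + h') * (1 - p) ^ j"
      proof (cases "h' = 0")
        case True thus ?thesis using j k by (simp add: Bw_def)
      next
        case False thus ?thesis using Bw_at[where h=h' and j=j and p=p, OF k] j by simp
      qed
      have B2: "Bw k p (h' + k) m' = (if j = 0 then 0 else cc k (h' + k) (j - 1) * p ^ ((k - 1) * j + h' + 1) * (1 - p) ^ (j - 1))"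
      proof (cases j)
        case 0
        have "\<not> (\<exists>j2. m' = k * j2 + (h' + k))" using j 0 k by auto
        thus ?thesis using Bw_off[of "h' + k" m' k p] k 0 by simp
      next
        case (Suc j2)
        have m'': "m' = k * j2 + (h' + k)" using j Suc by simp
        obtain k' where "k = Suc k'" using k by (cases k) auto
        hence "(k - 1) * j2 + (h' + k) = (k - 1) * j + h' + 1" using Suc
          by (simp add: algebra_simps)
        with m'' show ?thesis using Bw_at[where h="h' + k" and j=j2 and p=p, OF k] Suc by (simp add: ac_simps)
      qed
      have R: "cc k (Suc h') j = (if h' = 0 then (if j = 0 then 1 else 0) else cc k h' j)
           + (if j = 0 then 0 else cc k (h' + k) (j - 1))" by (rule cc_rec[OF k])
      show ?thesis
      proof (cases j)
        case 0 thus ?thesis using A L B1 B2 R by (simp add: algebra_simps)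
      next
        case (Suc j2)
        thus ?thesis using A L B1 B2 R by (simp add: algebra_simps)
      qed
    next
      case False
      have B1: "Bw k p h' m' = 0"
      proof (cases "h' = 0")
        case True
        hence "m' \<noteq> 0" using False by (auto dest: spec[of _ 0])
        thus ?thesis using True by (simp add: Bw_def)
      next
        case h0: False
        thus ?thesis using Bw_off[of h' m' k p] False by simp
      qed
      have B2: "Bw k p (h' + k) m' = 0"
      proof -
        have "\<not> (\<exists>j. m' = k * j + (h' + k))"
        proof
          assume "\<exists>j. m' = k * j + (h' + k)"
          then obtain j where "m' = k * j + (h' + k)" by blast
          hence "m' = k * (Suc j) + h'" by simp
          thus False using False by blast
        qed
        thus ?thesis using Bw_off[of "h' + k" m' k p] k by simp
      qed
      have "\<not> (\<exists>j. Suc m' = k * j + h)" using False Suc by auto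
      hence "Bw k p h (Suc m') = 0" using Bw_off[of h "Suc m'" k p] Suc by simp
      thus ?thesis using A B1 B2 by simp
    qed
  qed
qed



lemma fh_frozen: "fh k (0, D) xs = None"
  by (induction xs) (simp_all add: gst_def good_def)

lemma fh_pos: "fh k s xs \<noteq> Some 0"
  using fh_Some[of k s xs 0] by simp

lemma Aw_small: "m < h \<Longrightarrow> Aw k p h m = 0"
proof (induction m arbitrary: h)
  case 0 thus ?case by (cases h) auto
next
  case (Suc m)
  then obtain h' where "h = Suc h'" by (cases h) auto
  thus ?case using Suc by simp
qed

lemma prob_fh:
  assumes p: "0 \<le> p" "p \<le> 1" and k: "k \<ge> 2"
  shows "1 \<le> h \<Longrightarrow> m + k \<le> k * u + h \<Longrightarrow> m \<le> N \<Longrightarrow>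
    measure_pmf.prob (choice_pmf p N) {\<omega>. fh k (u, h) \<omega> = Some m} = Aw k p h m"
proof (induction N arbitrary: u h m)
  case 0
  then obtain h' where "h = Suc h'" by (cases h) auto
  thus ?case using 0 by simp
next
  case (Suc N)
  show ?case
  proof (cases "u = 0")
    case True
    thus ?thesis using Suc.prems k Aw_small[of m h k p] by (simp add: fh_frozen)
  next
    case u: False
    obtain h' where h: "h = Suc h'" using Suc.prems by (cases h) auto
    show ?thesis
    proof (cases m)
      case 0 thus ?thesis using h by (simp add: fh_pos)
    next
      case (Suc m')
      have PT: "measure_pmf.prob (choice_pmf p N) {\<omega>. fh k (u, h) (True # \<omega>) = Some m} = Aw k p h' m'"
      proof (cases "h' = 0")
        case True
        have "gst k True (u, h) = (u, 0)" using u h True by (simp add: gst_def)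
        hence "{\<omega>. fh k (u, h) (True # \<omega>) = Some m} = (if m' = 0 then UNIV else {})"
          using u Suc by (auto simp: good_def)
        thus ?thesis using True by simp
      next
        case False
        have g: "gst k True (u, h) = (u, h')" using u h by (simp add: gst_def)
        hence "{\<omega>. fh k (u, h) (True # \<omega>) = Some m} = {\<omega>. fh k (u, h') \<omega> = Some m'}"
          using False Suc by (auto simp: good_def)
        moreover have "measure_pmf.prob (choice_pmf p N) {\<omega>. fh k (u, h') \<omega> = Some m'} = Aw k p h' m'"
          using Suc.IH[of h' m' u] False Suc.prems h Suc by simp
        ultimately show ?thesis by simp
      qed
      have PF: "measure_pmf.prob (choice_pmf p N) {\<omega>. fh k (u, h) (False # \<omega>) = Some m} = Aw k p (h + k - 1) m'"
      proof -
        have g: "gst k False (u, h) = (u - 1, h + k - 1)" using u h by (simp add: gst_def)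
        hence "{\<omega>. fh k (u, h) (False # \<omega>) = Some m} = {\<omega>. fh k (u - 1, h + k - 1) \<omega> = Some m'}"
          using Suc h k by (auto simp: good_def)
        moreover have "m' + k \<le> k * (u - 1) + (h + k - 1)"
          using Suc.prems Suc u k by (simp add: diff_mult_distrib2)
        moreover have "measure_pmf.prob (choice_pmf p N) {\<omega>. fh k (u - 1, h + k - 1) \<omega> = Some m'} = Aw k p (h + k - 1) m'"
          using Suc.IH[of "h + k - 1" m' "u - 1"] Suc.prems h Suc calculation(2) k by simp
        ultimately show ?thesis by simp
      qed
      show ?thesis
        using prob_choice_Suc[OF p, of N "\<lambda>\<omega>. fh k (u, h) \<omega> = Some m"] PT PF h Suc by simp
    qed
  qed
qed



lemma cc_s: assumes "k \<ge> 2" "i \<ge> 1" shows "cc k (k - 1) (i - 1) = s_coef k i"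
proof -
  have e: "k * (i - 1) + (k - 1) = k * i - 1" using assms
    by (cases i) (auto simp: algebra_simps)
  have "real (k * i - 1) = real (k * i) - 1" using assms
    by (simp add: of_nat_diff) 
  moreover have "real (k - 1) = real k - 1" using assms by (simp add: of_nat_diff)
  ultimately show ?thesis unfolding cc_def s_coef_def e by simp
qed

lemma probY:
  assumes p: "0 \<le> p" "p \<le> 1" and k: "k \<ge> 2" and n: "n \<ge> 2" and i: "1 \<le> i" "i \<le> n - 1"
  shows "measure_pmf.prob (choice_pmf p (k * (n - 1))) {\<omega>. mb_Y k n \<omega> = i}
       = s_coef k i * p ^ ((k - 1) * i) * (1 - p) ^ (i - 1)"
proof -
  let ?M = "choice_pmf p (k * (n - 1))"
  have "{\<omega>. mb_Y k n \<omega> = i} \<inter> set_pmf ?M = {\<omega>. fh k (n, 0) \<omega> = Some (k * i)} \<inter> set_pmf ?M"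
    using Y_eq[OF k n i] set_choice[of p "k * (n - 1)"] by auto
  hence "measure_pmf.prob ?M {\<omega>. mb_Y k n \<omega> = i} = measure_pmf.prob ?M {\<omega>. fh k (n, 0) \<omega> = Some (k * i)}"
    by (metis measure_Int_set_pmf)
  also obtain N' where N': "k * (n - 1) = Suc N'" using k n by (cases "k * (n - 1)") auto
  have g: "gst k b (n, 0) = (n - 1, k - 1)" for b using n by (simp add: gst_def)
  have ng: "\<not> good (n - 1, k - 1)" using k by (simp add: good_def)
  have ki: "k * i = Suc (k * i - 1)" using k i by (cases "k * i") auto
  have S: "{\<omega>. fh k (n, 0) (b # \<omega>) = Some (k * i)} = {\<omega>. fh k (n - 1, k - 1) \<omega> = Some (k * i - 1)}" for b
    using g ng ki by (auto simp del: fh.simps simp: fh.simps(2)[of k "(n, 0)" b] split: if_splits) 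
  have "measure_pmf.prob ?M {\<omega>. fh k (n, 0) \<omega> = Some (k * i)} = measure_pmf.prob (choice_pmf p N') {\<omega>. fh k (n - 1, k - 1) \<omega> = Some (k * i - 1)}"
    unfolding N' using prob_choice_Suc[OF p, of N' "\<lambda>\<omega>. fh k (n, 0) \<omega> = Some (k * i)"] S by (simp add: algebra_simps)
  also have "\<dots> = Aw k p (k - 1) (k * i - 1)"
  proof (rule prob_fh[OF p k])
    show "1 \<le> k - 1" using k by simp
    have "k * i \<le> k * (n - 1)" using i by simp
    thus "k * i - 1 + k \<le> k * (n - 1) + (k - 1)" using k ki by linarith
    show "k * i - 1 \<le> N'" using N' \<open>k * i \<le> k * (n - 1)\<close> by linarith
  qed
  also have "\<dots> = Bw k p (k - 1) (k * (i - 1) + (k - 1))"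
    using Aw_Bw[of k p "k - 1" "k * i - 1"] k i by (cases i) (auto simp: algebra_simps)
  also have "\<dots> = cc k (k - 1) (i - 1) * p ^ ((k - 1) * (i - 1) + (k - 1)) * (1 - p) ^ (i - 1)"
    using Bw_at[where h="k - 1" and j="i - 1" and p=p] k by simp
  also have "(k - 1) * (i - 1) + (k - 1) = (k - 1) * i" using i by (cases i) auto
  finally show ?thesis using cc_s[OF k i(1)] by simp
qed



lemma Y_range: "1 \<le> mb_Y k n \<omega> \<and> mb_Y k n \<omega> \<le> n" if "n \<ge> 1"
proof (cases "\<exists>i\<in>{1..n-1}. mb_hits k n \<omega> i")
  case True
  have "(LEAST i. i \<in> {1..n-1} \<and> mb_hits k n \<omega> i) \<in> {1..n-1} \<and> mb_hits k n \<omega> (LEAST i. i \<in> {1..n-1} \<and> mb_hits k n \<omega> i)"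
    by (rule LeastI_ex) (use True in blast)
  thus ?thesis using True by (auto simp: mb_Y_def)
next
  case False thus ?thesis using that by (simp add: mb_Y_def)
qed

lemma R_sum:
  assumes n: "n \<ge> 2"
  shows "mb_R k n p = real n - (\<Sum>i=1..n-1. real (n - i) * measure_pmf.prob (choice_pmf p (k * (n - 1))) {\<omega>. mb_Y k n \<omega> = i})"
proof -
  let ?M = "choice_pmf p (k * (n - 1))"
  have pw: "real (mb_Y k n \<omega>) = real n - (\<Sum>i=1..n-1. real (n - i) * indicator {\<omega>. mb_Y k n \<omega> = i} \<omega>)" for \<omega>
  proof -
    have "(\<Sum>i=1..n-1. real (n - i) * indicator {\<omega>. mb_Y k n \<omega> = i} \<omega>)
        = (\<Sum>i=1..n-1. if mb_Y k n \<omega> = i then real (n - i) else 0)"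
      by (rule sum.cong) (auto simp: indicator_def)
    also have "\<dots> = (if mb_Y k n \<omega> \<in> {1..n-1} then real (n - mb_Y k n \<omega>) else 0)"
      using sum.delta'[of "{1..n-1}" "mb_Y k n \<omega>" "\<lambda>i. real (n - i)"] by simp
    finally show ?thesis using Y_range[of n k \<omega>] n by (auto simp: of_nat_diff)
  qed
  have int: "integrable (measure_pmf ?M) f" for f :: "bool list \<Rightarrow> real"
    by (rule integrable_measure_pmf_finite[OF finite_choice])
  have "mb_R k n p = measure_pmf.expectation ?M (\<lambda>\<omega>. real n - (\<Sum>i=1..n-1. real (n - i) * indicator {\<omega>. mb_Y k n \<omega> = i} \<omega>))"
    unfolding mb_R_def using pw by simp
  also have "\<dots> = real n - (\<Sum>i=1..n-1. real (n - i) * measure_pmf.prob ?M {\<omega>. mb_Y k n \<omega> = i})"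
  proof -
    let ?F = "\<lambda>\<omega>. (\<Sum>i=1..n-1. real (n - i) * indicator {\<omega>. mb_Y k n \<omega> = i} \<omega>)"
    have e1: "measure_pmf.expectation ?M (\<lambda>\<omega>. real n - ?F \<omega>) = measure_pmf.expectation ?M (\<lambda>_. real n) - measure_pmf.expectation ?M ?F"
      by (rule Bochner_Integration.integral_diff[OF int int])
    have e2: "measure_pmf.expectation ?M ?F = (\<Sum>i=1..n-1. measure_pmf.expectation ?M (\<lambda>\<omega>. real (n - i) * indicator {\<omega>. mb_Y k n \<omega> = i} \<omega>))"
      by (rule Bochner_Integration.integral_sum) (rule int)
    have e3: "measure_pmf.expectation ?M (\<lambda>\<omega>. c * indicator A \<omega>) = c * measure_pmf.prob ?M A" for c :: real and A
      by simp
    show ?thesis unfolding e1 e2 e3 by simp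
  qed
  finally show ?thesis .
qed



lemma R_closed:
  assumes k: "k \<ge> 2" and p: "0 < p" "p < 1" and n: "n \<ge> 1"
  shows "mb_R k n p = real n - (1 / (1 - p)) * (\<Sum>i=1..n-1. real (n - i) * s_coef k i * (p ^ (k - 1) * (1 - p)) ^ i)"
proof (cases "n = 1")
  case True
  thus ?thesis by (simp add: mb_R_def mb_Y_def)
next
  case False
  hence n2: "n \<ge> 2" using n by simp
  have q: "1 - p > 0" using p by simp
  have "mb_R k n p = real n - (\<Sum>i=1..n-1. real (n - i) * (s_coef k i * p ^ ((k - 1) * i) * (1 - p) ^ (i - 1)))"
    unfolding R_sum[OF n2] using probY[of p k n] p k n2 by (intro arg_cong2[where f="(-)"] refl sum.cong) auto
  also have "(\<Sum>i=1..n-1. real (n - i) * (s_coef k i * p ^ ((k - 1) * i) * (1 - p) ^ (i - 1)))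
     = (\<Sum>i=1..n-1. (1 / (1 - p)) * (real (n - i) * s_coef k i * (p ^ (k - 1) * (1 - p)) ^ i))"
  proof (rule sum.cong)
    fix i assume "i \<in> {1..n-1}"
    then obtain i' where i: "i = Suc i'" by (cases i) auto
    show "real (n - i) * (s_coef k i * p ^ ((k - 1) * i) * (1 - p) ^ (i - 1))
        = (1 / (1 - p)) * (real (n - i) * s_coef k i * (p ^ (k - 1) * (1 - p)) ^ i)"
    proof -
      have e: "(p ^ (k - 1) * (1 - p)) ^ i = p ^ ((k - 1) * i) * ((1 - p) * (1 - p) ^ (i - 1))"
        unfolding i by (simp add: power_mult_distrib power_mult power_add)
      show ?thesis unfolding e using q by (simp add: field_simps)
    qed
  qed simp
  also have "\<dots> = (1 / (1 - p)) * (\<Sum>i=1..n-1. real (n - i) * s_coef k i * (p ^ (k - 1) * (1 - p)) ^ i)"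
    by (simp add: sum_distrib_left)
  finally show ?thesis .
qed

lemma X_over: "fps_X / (1 - fps_X)^2 = (Abs_fps (\<lambda>n. of_nat n) :: real fps)"
proof -
  have "fps_nth ((1 - fps_X)^2 :: real fps) 0 \<noteq> 0" by (simp add: power2_eq_square)
  hence "fps_X / (1 - fps_X)^2 = fps_X * inverse ((1 - fps_X)^2 :: real fps)"
    by (simp add: fps_divide_unit)
  also have "\<dots> = fps_X * Abs_fps (\<lambda>n. of_nat (n + 1))" by (simp add: fps_one_over_one_minus_fps_X_squared)
  also have "\<dots> = Abs_fps (\<lambda>n. of_nat n)" by (rule fps_ext) auto
  finally show ?thesis .
qed

lemma gen_fun:
  fixes R :: "nat \<Rightarrow> real" and c q :: real
  assumes R: "\<And>n. n \<ge> 1 \<Longrightarrow> R n = real n - (1 / q) * (\<Sum>i=1..n-1. real (n - i) * s_coef k i * c ^ i)"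
  shows "Abs_fps (\<lambda>n. if n = 0 then 0 else R n) = fps_X / (1 - fps_X)^2 * (1 - fps_const (1 / q) * S_fps k c)"
proof (rule fps_ext)
  fix n
  let ?g = "(1 - fps_const (1 / q) * S_fps k c)"
  have g0: "fps_nth ?g 0 = 1" by (simp add: S_fps_def)
  have gi: "fps_nth ?g i = - (1 / q) * (s_coef k i * c ^ i)" if "i \<ge> 1" for i
    using that by (simp add: S_fps_def)
  have "fps_nth (fps_X / (1 - fps_X)^2 * ?g) n = fps_nth (?g * Abs_fps (\<lambda>n. of_nat n)) n"
    by (simp add: X_over mult.commute)
  also have "\<dots> = (\<Sum>i=0..n. fps_nth ?g i * real (n - i))" by (simp add: fps_mult_nth)
  finally have E: "fps_nth (fps_X / (1 - fps_X)^2 * ?g) n = (\<Sum>i=0..n. fps_nth ?g i * real (n - i))" .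
  show "fps_nth (Abs_fps (\<lambda>n. if n = 0 then 0 else R n)) n = fps_nth (fps_X / (1 - fps_X)^2 * ?g) n"
  proof (cases "n = 0")
    case True thus ?thesis using E g0 by simp
  next
    case False
    have "(\<Sum>i=0..n. fps_nth ?g i * real (n - i)) = fps_nth ?g 0 * real n + (\<Sum>i=1..n. fps_nth ?g i * real (n - i))"
      by (simp add: sum.atLeast_Suc_atMost)
    also have "(\<Sum>i=1..n. fps_nth ?g i * real (n - i)) = (\<Sum>i=1..n-1. fps_nth ?g i * real (n - i))"
    proof -
      have s: "{1..n} = insert n {1..n-1}" using False by auto
      have "n \<notin> {1..n-1}" using False by auto
      thus ?thesis unfolding s by (subst sum.insert) auto
    qed
    also have "\<dots> = (\<Sum>i=1..n-1. - (1 / q) * (real (n - i) * s_coef k i * c ^ i))"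
      by (rule sum.cong) (auto simp: S_fps_def)
    also have "\<dots> = - (1 / q) * (\<Sum>i=1..n-1. real (n - i) * s_coef k i * c ^ i)"
      by (simp add: sum_distrib_left)
    finally show ?thesis using E g0 R[of n] False by simp
  qed
qed


theorem theorem5p1:
  fixes k :: nat and p :: real
  assumes "k \<ge> 2" and "0 < p" and "p < 1"
  defines "q \<equiv> 1 - p"
  shows "mb_R k 1 p = 1
    \<and> (\<forall>n\<ge>2. mb_R k n p
          = real n - (1 / q) * (\<Sum>i=1..n-1. real (n - i) * s_coef k i * (p ^ (k - 1) * q) ^ i))
    \<and> Abs_fps (\<lambda>n. if n = 0 then 0 else mb_R k n p)
         = fps_X / (1 - fps_X)^2 * (1 - fps_const (1 / q) * S_fps k (p ^ (k - 1) * q))"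
proof -
  have R: "\<And>n. n \<ge> 1 \<Longrightarrow> mb_R k n p = real n - (1 / q) * (\<Sum>i=1..n-1. real (n - i) * s_coef k i * (p ^ (k - 1) * q) ^ i)"
    using R_closed[OF assms(1-3)] unfolding q_def by simp
  have "mb_R k 1 p = 1" using R[of 1] by simp
  moreover have "\<forall>n\<ge>2. mb_R k n p
          = real n - (1 / q) * (\<Sum>i=1..n-1. real (n - i) * s_coef k i * (p ^ (k - 1) * q) ^ i)"
    using R by simp
  moreover have "Abs_fps (\<lambda>n. if n = 0 then 0 else mb_R k n p)
         = fps_X / (1 - fps_X)^2 * (1 - fps_const (1 / q) * S_fps k (p ^ (k - 1) * q))"
    by (rule gen_fun) (rule R)
  ultimately show ?thesis by blast
qed

end
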